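(* Let $G=(V,E)$ be a temporal graph, $s\in V$, $t_s\in\mathbb{R}$, and let $T$ be either the DFS tree produced by DFS-v1 or the BFS tree produced by temporal BFS, on $G$ from $s$ with starting time $t_s$. For a vertex $v\neq s$, let $O(v)$ be the set of occurrences of $v$ in $T$. If $O(v)\neq\emptyset$, let $v_{\min}\in O(v)$ have minimal time value $\sigma$ among the occurrences in $O(v)$; then the sequence of tree edges on the path from the root to $v_{\min}$ in $T$ is a foremost path from $s$ to $v$, i.e. it is a temporal path from $s$ to $v$ starting at or after $t_s$ and its end time $t_{end}$ is at most $t_{end}(P')$ for every temporal path $P'$ from $s$ to $v$ starting at or after $t_s$. If $O(v)=\emptyset$, then there is no temporal path from $s$ to $v$ starting at or after $t_s$.
   Context: A temporal graph is a pair $G=(V,E)$ where $V$ is a finite set of vertices and $E$ is a finite set of temporal edges, i.e. triples $(u,v,t)$ with $u,v\in V$, $u\neq v$, $t\in\mathbb{R}$ (the time at which the edge is active); distinct elements of $E$ are distinct triples. A temporal path from $x$ to $y$ (starting at or after $t_s$) is a sequence $P=\langle (w_1,w_2,t_1),\dots,(w_k,w_{k+1},t_k)\rangle$ of $k\ge1$ edges of $E$ with $w_1=x$, $w_{k+1}=y$ and $t_s\le t_1\le t_2\le\dots\le t_k$; $t_{start}(P)=t_1$, $t_{end}(P)=t_k$. Temporal DFS-v1. The procedure maintains a value $\sigma(x)\in\mathbb{R}\cup\{\infty\}$ for every $x\in V$, initially $\infty$, and a set of already traversed edges, initially empty, and builds a rooted tree $T$ whose nodes are occurrences of vertices of $G$.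 Each occurrence carries a time value $\sigma$, namely the value assigned to $\sigma(x)$ when that occurrence was created. Start: create the root occurrence of $s$, set $\sigma(s)=t_s$, and make it current. Step (a): let $u$ be the vertex of the current occurrence, $\sigma_u$ its time value, and $A$ the set of edges $(u,v,t)\in E$ not yet traversed with $\sigma_u\le t$. If $A=\emptyset$: if the current occurrence is the root, terminate; otherwise make its parent current and repeat step (a). If $A\neq\emptyset$, choose any vertex $v$ such that $A$ contains an edge to $v$, select the edge $e=(u,v,t)$ of $A$ to $v$ with smallest $t$, mark it traversed and go to step (b). Step (b): if the current value $\sigma(v)>t$, create a new occurrence of $v$ as a child of the current occurrence joined by the tree edge $e$, set $\sigma(v):=t$ (its time value), make it current and go to (a); otherwise go to (a) with the same current occurrence. Temporal BFS. Records are tuples $(x,d,\tau,p)$ (vertex $x$, level $d$, time $\tau$, predecessor record $p$ or none); every record ever created is an occurrence (node) of the BFS tree $T$, rooted at the initial record, with a tree edge from the predecessor record to the record; the level and time of an occurrence are the final values of its fields. For each $x\in V$ a current value $\sigma(x)$ is kept, initially $\infty$, and set to $\tau$ whenever a record of $x$ is created or its time is updated to $\tau$. Initially the FIFO queue $Q$ contains only $(s,0,t_s,\text{none})$ and $\sigma(s)=t_s$; no edge is traversed. While $Q\neq\emptyset$: pop the front record $R=(u,d_u,\sigma_u,p_u)$; let $B$ be the set of edges $(u,v,t)\in E$ not yet traversed with $\sigma_u\le t$; for each vertex $v$ such that $B$ contains an edge to $v$ (in any order), let $e=(u,v,t)$ be the edge of $B$ to $v$ with smallest $t$, mark $e$ traversed,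 and: (i) if $Q$ contains no record of $v$ and $\sigma(v)>t$, create $(v,d_u+1,t,R)$ and append it to $Q$; (ii) if $Q$ contains a record of $v$ with level $d_u+1$ and $\sigma(v)>t$, set that record's time to $t$ and predecessor to $R$; (iii) if $Q$ contains a record of $v$ but none with level $d_u+1$, and $\sigma(v)>t$, create $(v,d_u+1,t,R)$ and append it to $Q$. *)

theory Defs
  imports Complex_Main
begin

type_synonym 'v tedge = "'v \<times> 'v \<times> real"

definition src :: "'v tedge \<Rightarrow> 'v" where "src e = fst e"
definition dst :: "'v tedge \<Rightarrow> 'v" where "dst e = fst (snd e)"
definition tm  :: "'v tedge \<Rightarrow> real" where "tm e = snd (snd e)"

definition temporal_graph :: "'v set \<Rightarrow> 'v tedge set \<Rightarrow> bool" where
  "temporal_graph V E \<longleftrightarrow> finite V \<and> finite E \<and>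
     (\<forall>e\<in>E. src e \<in> V \<and> dst e \<in> V \<and> src e \<noteq> dst e)"

definition temporal_path :: "'v tedge set \<Rightarrow> 'v \<Rightarrow> 'v \<Rightarrow> real \<Rightarrow> 'v tedge list \<Rightarrow> bool" where
  "temporal_path E x y ts P \<longleftrightarrow>
     P \<noteq> [] \<and> set P \<subseteq> E \<and> src (hd P) = x \<and> dst (last P) = y \<and>
     (\<forall>k. Suc k < length P \<longrightarrow> dst (P ! k) = src (P ! Suc k)) \<and>
     ts \<le> tm (hd P) \<and>
     (\<forall>k. Suc k < length P \<longrightarrow> tm (P ! k) \<le> tm (P ! Suc k))"

definition t_end :: "'v tedge list \<Rightarrow> real" where "t_end P = tm (last P)"

definition foremost_path :: "'v tedge set \<Rightarrow> 'v \<Rightarrow> 'v \<Rightarrow> real \<Rightarrow> 'v tedge list \<Rightarrow> bool" where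
  "foremost_path E x y ts P \<longleftrightarrow> temporal_path E x y ts P \<and>
     (\<forall>P'. temporal_path E x y ts P' \<longrightarrow> t_end P \<le> t_end P')"

text \<open>An occurrence (tree node): (vertex, time value sigma, parent index together with
  the tree edge joining the parent to this occurrence, or None for the root).
  A tree is the list of its occurrences; index 0 is the root.\<close>
type_synonym 'v occ = "'v \<times> real \<times> (nat \<times> 'v tedge) option"

definition occ_vertex :: "'v occ \<Rightarrow> 'v" where "occ_vertex o' = fst o'"
definition occ_time :: "'v occ \<Rightarrow> real" where "occ_time o' = fst (snd o')"
definition occ_parent :: "'v occ \<Rightarrow> (nat \<times> 'v tedge) option" where "occ_parent o' = snd (snd o')"

definition occs_of :: "'v occ list \<Rightarrow> 'v \<Rightarrow> nat set" where
  "occs_of T v = {i. i < length T \<and> occ_vertex (T ! i) = v}"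

inductive tree_path :: "'v occ list \<Rightarrow> nat \<Rightarrow> 'v tedge list \<Rightarrow> bool" for T where
  root: "i < length T \<Longrightarrow> occ_parent (T ! i) = None \<Longrightarrow> tree_path T i []"
| step: "i < length T \<Longrightarrow> occ_parent (T ! i) = Some (p, e) \<Longrightarrow> tree_path T p P
          \<Longrightarrow> tree_path T i (P @ [e])"

text \<open>sigma values in R \<union> {\<infinity>}: None represents \<infinity>.  above s t means s > t.\<close>
fun above :: "real option \<Rightarrow> real \<Rightarrow> bool" where
  "above None t = True"
| "above (Some x) t = (x > t)"

record 'v dfs_state =
  d_occ :: "'v occ list"
  d_sig :: "'v \<Rightarrow> real option"
  d_trav :: "'v tedge set"
  d_cur :: nat

definition dfs_init :: "'v \<Rightarrow> real \<Rightarrow> 'v dfs_state" where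
  "dfs_init s ts = \<lparr>d_occ = [(s, ts, None)], d_sig = (\<lambda>_. None)(s := Some ts),
                    d_trav = {}, d_cur = 0\<rparr>"

definition dfs_avail :: "'v tedge set \<Rightarrow> 'v dfs_state \<Rightarrow> 'v tedge set" where
  "dfs_avail E S = {e \<in> E. src e = occ_vertex (d_occ S ! d_cur S) \<and> e \<notin> d_trav S \<and>
                           occ_time (d_occ S ! d_cur S) \<le> tm e}"

text \<open>Choosing a vertex v with an edge of A to v and then the edge of A to v with smallest t
  amounts to choosing an edge e of A whose time is minimal among the edges of A to dst e.\<close>
inductive dfs_step :: "'v tedge set \<Rightarrow> 'v dfs_state \<Rightarrow> 'v dfs_state \<Rightarrow> bool" for E where
  backtrack: "dfs_avail E S = {} \<Longrightarrow> occ_parent (d_occ S ! d_cur S) = Some (p, e0)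
     \<Longrightarrow> dfs_step E S (S\<lparr>d_cur := p\<rparr>)"
| advance_new: "e \<in> dfs_avail E S \<Longrightarrow>
     (\<forall>e'\<in>dfs_avail E S. dst e' = dst e \<longrightarrow> tm e \<le> tm e') \<Longrightarrow>
     above (d_sig S (dst e)) (tm e) \<Longrightarrow>
     dfs_step E S (S\<lparr>d_occ := d_occ S @ [(dst e, tm e, Some (d_cur S, e))],
                    d_sig := (d_sig S)(dst e := Some (tm e)),
                    d_trav := insert e (d_trav S),
                    d_cur := length (d_occ S)\<rparr>)"
| advance_old: "e \<in> dfs_avail E S \<Longrightarrow>
     (\<forall>e'\<in>dfs_avail E S. dst e' = dst e \<longrightarrow> tm e \<le> tm e') \<Longrightarrow>
     \<not> above (d_sig S (dst e)) (tm e) \<Longrightarrow>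
     dfs_step E S (S\<lparr>d_trav := insert e (d_trav S)\<rparr>)"

definition dfs_final :: "'v tedge set \<Rightarrow> 'v dfs_state \<Rightarrow> bool" where
  "dfs_final E S \<longleftrightarrow> dfs_avail E S = {} \<and> d_cur S = 0"

definition dfs_tree :: "'v tedge set \<Rightarrow> 'v \<Rightarrow> real \<Rightarrow> 'v occ list \<Rightarrow> bool" where
  "dfs_tree E s ts T \<longleftrightarrow> (\<exists>S. (dfs_step E)\<^sup>*\<^sup>* (dfs_init s ts) S \<and> dfs_final E S \<and> T = d_occ S)"

text \<open>A record (x, d, tau, p): vertex, level, time, and predecessor record index together
  with the tree edge from the predecessor (None for the initial record).\<close>
type_synonym 'v brec = "'v \<times> nat \<times> real \<times> (nat \<times> 'v tedge) option"

definition r_vertex :: "'v brec \<Rightarrow> 'v" where "r_vertex r = fst r"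
definition r_level :: "'v brec \<Rightarrow> nat" where "r_level r = fst (snd r)"
definition r_time :: "'v brec \<Rightarrow> real" where "r_time r = fst (snd (snd r))"

text \<open>b_recs: all records ever created (indices = record identities); b_queue: the FIFO queue Q;
  b_proc: Some (R, B, W) while the popped record R is being processed, with the edge set B
  computed at pop time and W the vertices not yet handled.\<close>
record 'v bfs_state =
  b_recs :: "'v brec list"
  b_queue :: "nat list"
  b_sig :: "'v \<Rightarrow> real option"
  b_trav :: "'v tedge set"
  b_proc :: "(nat \<times> 'v tedge set \<times> 'v set) option"

definition bfs_init :: "'v \<Rightarrow> real \<Rightarrow> 'v bfs_state" where
  "bfs_init s ts = \<lparr>b_recs = [(s, 0, ts, None)], b_queue = [0],
     b_sig = (\<lambda>_. None)(s := Some ts), b_trav = {}, b_proc = None\<rparr>"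

definition in_queue :: "'v bfs_state \<Rightarrow> 'v \<Rightarrow> bool" where
  "in_queue S v \<longleftrightarrow> (\<exists>i\<in>set (b_queue S). r_vertex (b_recs S ! i) = v)"

definition in_queue_lvl :: "'v bfs_state \<Rightarrow> 'v \<Rightarrow> nat \<Rightarrow> bool" where
  "in_queue_lvl S v d \<longleftrightarrow>
     (\<exists>i\<in>set (b_queue S). r_vertex (b_recs S ! i) = v \<and> r_level (b_recs S ! i) = d)"

inductive bfs_step :: "'v tedge set \<Rightarrow> 'v bfs_state \<Rightarrow> 'v bfs_state \<Rightarrow> bool" for E where
  pop: "b_proc S = None \<Longrightarrow> b_queue S = r # rest \<Longrightarrow>
     B = {e \<in> E. src e = r_vertex (b_recs S ! r) \<and> e \<notin> b_trav S \<and>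
                 r_time (b_recs S ! r) \<le> tm e} \<Longrightarrow>
     bfs_step E S (S\<lparr>b_queue := rest, b_proc := Some (r, B, dst ` B)\<rparr>)"
| finish: "b_proc S = Some (r, B, {}) \<Longrightarrow> bfs_step E S (S\<lparr>b_proc := None\<rparr>)"
| create_i: "b_proc S = Some (r, B, W) \<Longrightarrow> e \<in> B \<Longrightarrow> dst e \<in> W \<Longrightarrow>
     (\<forall>e'\<in>B. dst e' = dst e \<longrightarrow> tm e \<le> tm e') \<Longrightarrow>
     \<not> in_queue S (dst e) \<Longrightarrow> above (b_sig S (dst e)) (tm e) \<Longrightarrow>
     bfs_step E S (S\<lparr>b_recs := b_recs S @ [(dst e, Suc (r_level (b_recs S ! r)), tm e, Some (r, e))],
                    b_queue := b_queue S @ [length (b_recs S)],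
                    b_sig := (b_sig S)(dst e := Some (tm e)),
                    b_trav := insert e (b_trav S),
                    b_proc := Some (r, B, W - {dst e})\<rparr>)"
| update_ii: "b_proc S = Some (r, B, W) \<Longrightarrow> e \<in> B \<Longrightarrow> dst e \<in> W \<Longrightarrow>
     (\<forall>e'\<in>B. dst e' = dst e \<longrightarrow> tm e \<le> tm e') \<Longrightarrow>
     i \<in> set (b_queue S) \<Longrightarrow> r_vertex (b_recs S ! i) = dst e \<Longrightarrow>
     r_level (b_recs S ! i) = Suc (r_level (b_recs S ! r)) \<Longrightarrow>
     above (b_sig S (dst e)) (tm e) \<Longrightarrow>
     bfs_step E S (S\<lparr>b_recs := (b_recs S)[i := (dst e, Suc (r_level (b_recs S ! r)), tm e, Some (r, e))],
                    b_sig := (b_sig S)(dst e := Some (tm e)),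
                    b_trav := insert e (b_trav S),
                    b_proc := Some (r, B, W - {dst e})\<rparr>)"
| create_iii: "b_proc S = Some (r, B, W) \<Longrightarrow> e \<in> B \<Longrightarrow> dst e \<in> W \<Longrightarrow>
     (\<forall>e'\<in>B. dst e' = dst e \<longrightarrow> tm e \<le> tm e') \<Longrightarrow>
     in_queue S (dst e) \<Longrightarrow> \<not> in_queue_lvl S (dst e) (Suc (r_level (b_recs S ! r))) \<Longrightarrow>
     above (b_sig S (dst e)) (tm e) \<Longrightarrow>
     bfs_step E S (S\<lparr>b_recs := b_recs S @ [(dst e, Suc (r_level (b_recs S ! r)), tm e, Some (r, e))],
                    b_queue := b_queue S @ [length (b_recs S)],
                    b_sig := (b_sig S)(dst e := Some (tm e)),
                    b_trav := insert e (b_trav S),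
                    b_proc := Some (r, B, W - {dst e})\<rparr>)"
| skip: "b_proc S = Some (r, B, W) \<Longrightarrow> e \<in> B \<Longrightarrow> dst e \<in> W \<Longrightarrow>
     (\<forall>e'\<in>B. dst e' = dst e \<longrightarrow> tm e \<le> tm e') \<Longrightarrow>
     \<not> above (b_sig S (dst e)) (tm e) \<Longrightarrow>
     bfs_step E S (S\<lparr>b_trav := insert e (b_trav S),
                    b_proc := Some (r, B, W - {dst e})\<rparr>)"

definition bfs_final :: "'v bfs_state \<Rightarrow> bool" where
  "bfs_final S \<longleftrightarrow> b_queue S = [] \<and> b_proc S = None"

definition brec_to_occ :: "'v brec \<Rightarrow> 'v occ" where
  "brec_to_occ r = (fst r, fst (snd (snd r)), snd (snd (snd r)))"

definition bfs_tree :: "'v tedge set \<Rightarrow> 'v \<Rightarrow> real \<Rightarrow> 'v occ list \<Rightarrow> bool" where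
  "bfs_tree E s ts T \<longleftrightarrow>
     (\<exists>S. (bfs_step E)\<^sup>*\<^sup>* (bfs_init s ts) S \<and> bfs_final S \<and> T = map brec_to_occ (b_recs S))"

end

theory Submission
  imports Defs
begin


definition sle :: "real option \<Rightarrow> real \<Rightarrow> bool" where
  "sle o' t \<longleftrightarrow> (\<exists>\<tau>. o' = Some \<tau> \<and> \<tau> \<le> t)"

definition closed_occ :: "'v tedge set \<Rightarrow> ('v \<Rightarrow> real option) \<Rightarrow> 'v occ list \<Rightarrow> nat \<Rightarrow> bool" where
  "closed_occ E \<sigma> T i \<longleftrightarrow> (\<forall>e\<in>E. src e = occ_vertex (T!i) \<longrightarrow> occ_time (T!i) \<le> tm e \<longrightarrow> sle (\<sigma> (dst e)) (tm e))"

definition base :: "'v tedge set \<Rightarrow> 'v \<Rightarrow> real \<Rightarrow> 'v occ list \<Rightarrow> ('v \<Rightarrow> real option) \<Rightarrow> bool" where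
  "base E s ts T \<sigma> \<longleftrightarrow>
  (\<forall>i<length T. occ_parent (T!i) = None \<longrightarrow> occ_vertex (T!i) = s \<and> occ_time (T!i) = ts) \<and>
  (\<forall>i<length T. \<forall>p e. occ_parent (T!i) = Some (p,e) \<longrightarrow> p < i \<and> e \<in> E \<and> src e = occ_vertex (T!p)
      \<and> dst e = occ_vertex (T!i) \<and> tm e = occ_time (T!i) \<and> occ_time (T!p) \<le> tm e) \<and>
  (\<forall>x \<tau>. \<sigma> x = Some \<tau> \<longrightarrow> (\<exists>i<length T. occ_vertex (T!i) = x \<and> occ_time (T!i) = \<tau>)) \<and>
  (\<forall>i<length T. sle (\<sigma> (occ_vertex (T!i))) (occ_time (T!i))) \<and>
  \<sigma> s = Some ts \<and>
  (\<forall>i<length T. ts \<le> occ_time (T!i))"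

definition good :: "'v tedge set \<Rightarrow> 'v \<Rightarrow> real \<Rightarrow> 'v occ list \<Rightarrow> ('v \<Rightarrow> real option) \<Rightarrow> bool" where
  "good E s ts T \<sigma> \<longleftrightarrow> base E s ts T \<sigma> \<and> (\<forall>i<length T. closed_occ E \<sigma> T i)"

lemma temporal_path_single:
  "e \<in> E \<Longrightarrow> ts \<le> tm e \<Longrightarrow> temporal_path E (src e) (dst e) ts [e]"
  by (simp add: temporal_path_def)

lemma temporal_path_snoc:
  assumes "temporal_path E x y ts P" "e \<in> E" "src e = y" "t_end P \<le> tm e"
  shows "temporal_path E x (dst e) ts (P @ [e])"
proof -
  have ne: "P \<noteq> []" using assms(1) by (simp add: temporal_path_def)
  have lst: "P ! (length P - 1) = last P" using ne by (simp add: last_conv_nth)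
  have A: "\<forall>k. Suc k < length (P@[e]) \<longrightarrow> dst ((P@[e]) ! k) = src ((P@[e]) ! Suc k)"
  proof (intro allI impI)
    fix k assume k: "Suc k < length (P@[e])"
    show "dst ((P@[e]) ! k) = src ((P@[e]) ! Suc k)"
    proof (cases "Suc k < length P")
      case True thus ?thesis using assms(1) by (simp add: nth_append temporal_path_def)
    next
      case False
      hence "k = length P - 1" using k ne by auto
      thus ?thesis using assms(1,3) lst ne False by (simp add: nth_append temporal_path_def)
    qed
  qed
  have B: "\<forall>k. Suc k < length (P@[e]) \<longrightarrow> tm ((P@[e]) ! k) \<le> tm ((P@[e]) ! Suc k)"
  proof (intro allI impI)
    fix k assume k: "Suc k < length (P@[e])"
    show "tm ((P@[e]) ! k) \<le> tm ((P@[e]) ! Suc k)"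
    proof (cases "Suc k < length P")
      case True thus ?thesis using assms(1) by (simp add: nth_append temporal_path_def)
    next
      case False
      hence "k = length P - 1" using k ne by auto
      thus ?thesis using assms(4) lst ne False by (simp add: nth_append t_end_def)
    qed
  qed
  show ?thesis using assms ne A B by (simp add: temporal_path_def)
qed

lemma good_tree_path:
  assumes g: "good E s ts T \<sigma>" and tp: "tree_path T i P"
  shows "(P = [] \<and> occ_vertex (T!i) = s \<and> occ_time (T!i) = ts) \<or>
         (temporal_path E s (occ_vertex (T!i)) ts P \<and> t_end P = occ_time (T!i))"
  using tp
proof (induction rule: tree_path.induct)
  case (root i)
  then show ?case using g by (simp add: good_def base_def)
next
  case (step i p e P)
  have par: "p < i \<and> e \<in> E \<and> src e = occ_vertex (T!p)
      \<and> dst e = occ_vertex (T!i) \<and> tm e = occ_time (T!i) \<and> occ_time (T!p) \<le> tm e"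
    using g step.hyps(1,2) unfolding good_def base_def by blast
  from step.IH show ?case
  proof
    assume "P = [] \<and> occ_vertex (T!p) = s \<and> occ_time (T!p) = ts"
    thus ?thesis using par temporal_path_single[of e E ts] by (auto simp: t_end_def)
  next
    assume "temporal_path E s (occ_vertex (T!p)) ts P \<and> t_end P = occ_time (T!p)"
    thus ?thesis using par temporal_path_snoc[of E s "occ_vertex (T!p)" ts P e]
      by (auto simp: t_end_def)
  qed
qed

lemma good_tree_path_ex:
  assumes g: "good E s ts T \<sigma>"
  shows "i < length T \<Longrightarrow> \<exists>P. tree_path T i P"
proof (induction i rule: less_induct)
  case (less i)
  show ?case
  proof (cases "occ_parent (T!i)")
    case None thus ?thesis using less.prems tree_path.root by blast
  next
    case (Some pe)
    then obtain p e where pe: "occ_parent (T!i) = Some (p,e)" by (cases pe) auto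
    hence "p < i" using g less.prems unfolding good_def base_def by blast
    then obtain P where "tree_path T p P" using less by auto
    thus ?thesis using tree_path.step[OF less.prems pe] by blast
  qed
qed

lemma good_complete:
  assumes g: "good E s ts T \<sigma>" and tp: "temporal_path E s y ts P"
  shows "sle (\<sigma> y) (t_end P)"
proof -
  have cl: "\<And>u \<tau> e. \<sigma> u = Some \<tau> \<Longrightarrow> e \<in> E \<Longrightarrow> src e = u \<Longrightarrow> \<tau> \<le> tm e \<Longrightarrow> sle (\<sigma> (dst e)) (tm e)"
  proof -
    fix u \<tau> e assume a: "\<sigma> u = Some \<tau>" "e \<in> E" "src e = u" "\<tau> \<le> tm e"
    then obtain i where "i < length T" "occ_vertex (T!i) = u" "occ_time (T!i) = \<tau>"
      using g unfolding good_def base_def by blast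
    moreover have "closed_occ E \<sigma> T i" using g \<open>i < length T\<close> unfolding good_def base_def by blast
    ultimately show "sle (\<sigma> (dst e)) (tm e)" using a unfolding closed_occ_def by blast
  qed
  have ne: "P \<noteq> []" and sub: "set P \<subseteq> E" using tp by (auto simp: temporal_path_def)
  have "\<forall>k<length P. sle (\<sigma> (dst (P!k))) (tm (P!k))"
  proof (intro allI impI)
    fix k assume "k < length P"
    thus "sle (\<sigma> (dst (P!k))) (tm (P!k))"
    proof (induction k)
      case 0
      have "P!0 \<in> E" using sub ne by auto
      moreover have "src (P!0) = s" "ts \<le> tm (P!0)" using tp ne by (auto simp: temporal_path_def hd_conv_nth)
      moreover have "\<sigma> s = Some ts" using g by (simp add: good_def base_def)
      ultimately show ?case using cl by blast
    next
      case (Suc k)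
      then obtain \<tau> where t: "\<sigma> (dst (P!k)) = Some \<tau>" "\<tau> \<le> tm (P!k)" by (auto simp: sle_def)
      have "P!Suc k \<in> E" using sub Suc.prems by auto
      moreover have "src (P!Suc k) = dst (P!k)" "tm (P!k) \<le> tm (P!Suc k)"
        using tp Suc.prems by (auto simp: temporal_path_def)
      ultimately show ?case using cl[OF t(1)] t(2) by fastforce
    qed
  qed
  moreover have "dst (last P) = y" using tp by (simp add: temporal_path_def)
  ultimately show ?thesis using ne
    by (metis diff_less last_conv_nth length_greater_0_conv t_end_def zero_less_one)
qed

lemma good_main:
  assumes g: "good E s ts T \<sigma>" and vs: "v \<noteq> s"
  shows "(occs_of T v \<noteq> {} \<longrightarrow>
            (\<forall>i\<in>occs_of T v. (\<forall>j\<in>occs_of T v. occ_time (T ! i) \<le> occ_time (T ! j)) \<longrightarrow>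
               (\<exists>P. tree_path T i P) \<and> (\<forall>P. tree_path T i P \<longrightarrow> foremost_path E s v ts P)))
       \<and> (occs_of T v = {} \<longrightarrow> \<not> (\<exists>P. temporal_path E s v ts P))"
proof (intro conjI impI ballI)
  fix i assume i: "i \<in> occs_of T v" and mn: "\<forall>j\<in>occs_of T v. occ_time (T ! i) \<le> occ_time (T ! j)"
  have il: "i < length T" "occ_vertex (T!i) = v" using i by (auto simp: occs_of_def)
  show "\<exists>P. tree_path T i P" using good_tree_path_ex[OF g il(1)] .
  show "\<forall>P. tree_path T i P \<longrightarrow> foremost_path E s v ts P"
  proof (intro allI impI)
    fix P assume "tree_path T i P"
    hence tp: "temporal_path E s v ts P" "t_end P = occ_time (T!i)"
      using good_tree_path[OF g] il vs by fastforce+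
    show "foremost_path E s v ts P" unfolding foremost_path_def
    proof (intro conjI allI impI)
      show "temporal_path E s v ts P" by fact
      fix P' assume "temporal_path E s v ts P'"
      then obtain \<tau> where t: "\<sigma> v = Some \<tau>" "\<tau> \<le> t_end P'"
        using good_complete[OF g] by (fastforce simp: sle_def)
      then obtain j where "j < length T" "occ_vertex (T!j) = v" "occ_time (T!j) = \<tau>"
        using g unfolding good_def base_def by blast
      hence "occ_time (T!i) \<le> \<tau>" using mn by (auto simp: occs_of_def)
      thus "t_end P \<le> t_end P'" using tp t by simp
    qed
  qed
next
  assume e: "occs_of T v = {}"
  show "\<not> (\<exists>P. temporal_path E s v ts P)"
  proof
    assume "\<exists>P. temporal_path E s v ts P"
    then obtain P where "temporal_path E s v ts P" by blast
    then obtain \<tau> where t: "\<sigma> v = Some \<tau>"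
      using good_complete[OF g] by (fastforce simp: sle_def)
    then obtain j where "j < length T" "occ_vertex (T!j) = v"
      using g unfolding good_def base_def by blast
    thus False using e by (auto simp: occs_of_def)
  qed
qed



definition dec :: "('v \<Rightarrow> real option) \<Rightarrow> ('v \<Rightarrow> real option) \<Rightarrow> bool" where
  "dec \<sigma> \<sigma>' \<longleftrightarrow> (\<forall>x \<tau>. \<sigma> x = Some \<tau> \<longrightarrow> sle (\<sigma>' x) \<tau>)"

lemma sle_mono: "sle o' t \<Longrightarrow> t \<le> t' \<Longrightarrow> sle o' t'"
  by (auto simp: sle_def)

lemma sle_dec: "sle (\<sigma> x) t \<Longrightarrow> dec \<sigma> \<sigma>' \<Longrightarrow> sle (\<sigma>' x) t"
  unfolding sle_def dec_def by force

lemma dec_refl: "dec \<sigma> \<sigma>"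
  by (auto simp: dec_def sle_def)

lemma dec_upd: "above (\<sigma> x) t \<Longrightarrow> dec \<sigma> (\<sigma>(x := Some t))"
  by (cases "\<sigma> x") (auto simp: dec_def sle_def)

lemma not_above_sle: "\<not> above o' t \<Longrightarrow> sle o' t"
  by (cases o') (auto simp: sle_def)

lemma closed_dec: "closed_occ E \<sigma> T i \<Longrightarrow> dec \<sigma> \<sigma>' \<Longrightarrow> T'!i = T!i \<Longrightarrow> closed_occ E \<sigma>' T' i"
  unfolding closed_occ_def using sle_dec by metis

lemma base_append:
  assumes b: "base E s ts T \<sigma>" and c: "c < length T" and e: "e \<in> E" "src e = occ_vertex (T!c)"
    "occ_time (T!c) \<le> tm e" and ab: "above (\<sigma> (dst e)) (tm e)"
  shows "base E s ts (T @ [(dst e, tm e, Some (c,e))]) (\<sigma>(dst e := Some (tm e)))"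
proof -
  let ?x = "(dst e, tm e, Some (c,e))"
  let ?T = "T @ [?x]"
  let ?s = "\<sigma>(dst e := Some (tm e))"
  have tsle: "ts \<le> tm e" using b c e(3) unfolding base_def by force
  have ds: "dst e \<noteq> s"
  proof
    assume "dst e = s"
    hence "\<sigma> (dst e) = Some ts" using b by (simp add: base_def)
    thus False using ab tsle by simp
  qed
  have nth: "\<And>i. i < length ?T \<Longrightarrow> ?T ! i = (if i < length T then T!i else ?x)"
    by (simp add: nth_append)
  have old: "\<And>i. i < length T \<Longrightarrow> ?T ! i = T ! i" by (simp add: nth_append)
  have new: "?T ! length T = ?x" by simp
  have lt: "\<And>i. i < length ?T \<longleftrightarrow> i < length T \<or> i = length T" by auto
  have B1: "\<forall>i<length ?T. occ_parent (?T!i) = None \<longrightarrow> occ_vertex (?T!i) = s \<and> occ_time (?T!i) = ts"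
    using b unfolding base_def lt by (auto simp: old occ_parent_def)
  have B2: "\<forall>i<length ?T. \<forall>p e'. occ_parent (?T!i) = Some (p,e') \<longrightarrow> p < i \<and> e' \<in> E \<and> src e' = occ_vertex (?T!p)
      \<and> dst e' = occ_vertex (?T!i) \<and> tm e' = occ_time (?T!i) \<and> occ_time (?T!p) \<le> tm e'"
  proof (intro allI impI)
    fix i p e' assume i: "i < length ?T" and pe: "occ_parent (?T!i) = Some (p,e')"
    show "p < i \<and> e' \<in> E \<and> src e' = occ_vertex (?T!p)
      \<and> dst e' = occ_vertex (?T!i) \<and> tm e' = occ_time (?T!i) \<and> occ_time (?T!p) \<le> tm e'"
    proof (cases "i < length T")
      case True
      hence "p < i \<and> e' \<in> E \<and> src e' = occ_vertex (T!p)
      \<and> dst e' = occ_vertex (T!i) \<and> tm e' = occ_time (T!i) \<and> occ_time (T!p) \<le> tm e'"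
        using b pe old[OF True] unfolding base_def by metis
      thus ?thesis using True old[of p] old[OF True] by auto
    next
      case False
      hence "i = length T" using i by simp
      thus ?thesis using pe c e old[OF c] by (auto simp: occ_parent_def occ_vertex_def occ_time_def)
    qed
  qed
  have B3: "\<forall>x \<tau>. ?s x = Some \<tau> \<longrightarrow> (\<exists>i<length ?T. occ_vertex (?T!i) = x \<and> occ_time (?T!i) = \<tau>)"
  proof (intro allI impI)
    fix x \<tau> assume a: "?s x = Some \<tau>"
    show "\<exists>i<length ?T. occ_vertex (?T!i) = x \<and> occ_time (?T!i) = \<tau>"
    proof (cases "x = dst e")
      case True thus ?thesis using a new by (intro exI[of _ "length T"]) (auto simp: occ_vertex_def occ_time_def)
    next
      case False
      then obtain i where "i < length T" "occ_vertex (T!i) = x" "occ_time (T!i) = \<tau>"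
      proof -
        have "\<sigma> x = Some \<tau>" using a False by simp
        thus ?thesis using b that unfolding base_def by metis
      qed
      thus ?thesis using old by (intro exI[of _ i]) auto
    qed
  qed
  have B4: "\<forall>i<length ?T. sle (?s (occ_vertex (?T!i))) (occ_time (?T!i))"
  proof (intro allI impI)
    fix i assume i: "i < length ?T"
    show "sle (?s (occ_vertex (?T!i))) (occ_time (?T!i))"
    proof (cases "i < length T")
      case True
      hence "sle (\<sigma> (occ_vertex (T!i))) (occ_time (T!i))" using b unfolding base_def by blast
      thus ?thesis using sle_dec[OF _ dec_upd[of \<sigma> "dst e" "tm e", OF ab]] old[OF True] by metis
    next
      case False
      hence "i = length T" using i by simp
      thus ?thesis by (simp add: occ_vertex_def occ_time_def sle_def)
    qed
  qed
  have B5: "?s s = Some ts" using b ds by (simp add: base_def)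
  have B6: "\<forall>i<length ?T. ts \<le> occ_time (?T!i)"
    using b tsle unfolding base_def lt by (auto simp: old occ_time_def)
  show ?thesis unfolding base_def using B1 B2 B3 B4 B5 B6 by blast
qed

lemma base_update:
  assumes b: "base E s ts T \<sigma>" and j: "j < length T" and c: "c < j" and e: "e \<in> E" "src e = occ_vertex (T!c)"
    "occ_time (T!c) \<le> tm e" and dj: "dst e = occ_vertex (T!j)" and ab: "above (\<sigma> (dst e)) (tm e)"
    and np: "\<forall>k<length T. \<forall>p e'. occ_parent (T!k) = Some (p,e') \<longrightarrow> p \<noteq> j"
  shows "base E s ts (T[j := (dst e, tm e, Some (c,e))]) (\<sigma>(dst e := Some (tm e)))"
proof -
  let ?x = "(dst e, tm e, Some (c,e))"
  let ?T = "T[j := ?x]"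
  let ?s = "\<sigma>(dst e := Some (tm e))"
  have cl: "c < length T" using c j by simp
  have tsle: "ts \<le> tm e" using b cl e(3) unfolding base_def by force
  have ds: "dst e \<noteq> s"
  proof
    assume "dst e = s"
    hence "\<sigma> (dst e) = Some ts" using b by (simp add: base_def)
    thus False using ab tsle by simp
  qed
  have len: "length ?T = length T" by simp
  have old: "\<And>i. i \<noteq> j \<Longrightarrow> ?T ! i = T ! i" by simp
  have new: "?T ! j = ?x" using j by simp
  have vert: "\<And>i. i < length T \<Longrightarrow> occ_vertex (?T!i) = occ_vertex (T!i)"
    by (metis dj new old occ_vertex_def fst_conv)
  have B1: "\<forall>i<length ?T. occ_parent (?T!i) = None \<longrightarrow> occ_vertex (?T!i) = s \<and> occ_time (?T!i) = ts"
    using b new old unfolding base_def len by (metis occ_parent_def option.distinct(1) snd_conv)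
  have B2: "\<forall>i<length ?T. \<forall>p e'. occ_parent (?T!i) = Some (p,e') \<longrightarrow> p < i \<and> e' \<in> E \<and> src e' = occ_vertex (?T!p)
      \<and> dst e' = occ_vertex (?T!i) \<and> tm e' = occ_time (?T!i) \<and> occ_time (?T!p) \<le> tm e'"
  proof (intro allI impI)
    fix i p e' assume i: "i < length ?T" and pe: "occ_parent (?T!i) = Some (p,e')"
    show "p < i \<and> e' \<in> E \<and> src e' = occ_vertex (?T!p)
      \<and> dst e' = occ_vertex (?T!i) \<and> tm e' = occ_time (?T!i) \<and> occ_time (?T!p) \<le> tm e'"
    proof (cases "i = j")
      case False
      hence pe': "occ_parent (T!i) = Some (p,e')" using pe old by simp
      hence "p < i \<and> e' \<in> E \<and> src e' = occ_vertex (T!p)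
      \<and> dst e' = occ_vertex (T!i) \<and> tm e' = occ_time (T!i) \<and> occ_time (T!p) \<le> tm e'"
        using b i unfolding base_def len by metis
      moreover have "p \<noteq> j" using np pe' i len by metis
      ultimately show ?thesis using False old[of p] old[of i] by auto
    next
      case True
      thus ?thesis using pe c e new old[of c] dj by (auto simp: occ_parent_def occ_vertex_def occ_time_def)
    qed
  qed
  have B3: "\<forall>x \<tau>. ?s x = Some \<tau> \<longrightarrow> (\<exists>i<length ?T. occ_vertex (?T!i) = x \<and> occ_time (?T!i) = \<tau>)"
  proof (intro allI impI)
    fix x \<tau> assume a: "?s x = Some \<tau>"
    show "\<exists>i<length ?T. occ_vertex (?T!i) = x \<and> occ_time (?T!i) = \<tau>"
    proof (cases "x = dst e")
      case True thus ?thesis using a new j by (intro exI[of _ j]) (auto simp: occ_vertex_def occ_time_def)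
    next
      case False
      then obtain i where i: "i < length T" "occ_vertex (T!i) = x" "occ_time (T!i) = \<tau>"
      proof -
        have "\<sigma> x = Some \<tau>" using a False by simp
        thus ?thesis using b that unfolding base_def by metis
      qed
      hence "i \<noteq> j" using False dj by auto
      thus ?thesis using old i by (intro exI[of _ i]) auto
    qed
  qed
  have B4: "\<forall>i<length ?T. sle (?s (occ_vertex (?T!i))) (occ_time (?T!i))"
  proof (intro allI impI)
    fix i assume i: "i < length ?T"
    show "sle (?s (occ_vertex (?T!i))) (occ_time (?T!i))"
    proof (cases "i = j")
      case False
      hence "sle (\<sigma> (occ_vertex (T!i))) (occ_time (T!i))" using b i unfolding base_def by simp
      thus ?thesis using sle_dec[OF _ dec_upd[of \<sigma> "dst e" "tm e", OF ab]] old[OF False] by metis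
    next
      case True
      thus ?thesis using new by (simp add: occ_vertex_def occ_time_def sle_def)
    qed
  qed
  have B5: "?s s = Some ts" using b ds by (simp add: base_def)
  have B6: "\<forall>i<length ?T. ts \<le> occ_time (?T!i)"
    using b tsle new old unfolding base_def len by (metis occ_time_def fst_conv snd_conv)
  show ?thesis unfolding base_def using B1 B2 B3 B4 B5 B6 by blast
qed


lemma base_parentD: "base E s ts T \<sigma> \<Longrightarrow> i < length T \<Longrightarrow> occ_parent (T!i) = Some (p,e) \<Longrightarrow>
  p < i \<and> e \<in> E \<and> src e = occ_vertex (T!p) \<and> dst e = occ_vertex (T!i) \<and> tm e = occ_time (T!i) \<and> occ_time (T!p) \<le> tm e"
  unfolding base_def by blast

lemma base_sigD: "base E s ts T \<sigma> \<Longrightarrow> \<sigma> x = Some \<tau> \<Longrightarrow> \<exists>i<length T. occ_vertex (T!i) = x \<and> occ_time (T!i) = \<tau>"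
  unfolding base_def by blast

lemma base_s: "base E s ts T \<sigma> \<Longrightarrow> \<sigma> s = Some ts"
  unfolding base_def by blast



inductive anc :: "'v occ list \<Rightarrow> nat \<Rightarrow> nat \<Rightarrow> bool" for T where
  anc_refl: "anc T j j"
| anc_step: "j < length T \<Longrightarrow> occ_parent (T!j) = Some (p,e) \<Longrightarrow> anc T i p \<Longrightarrow> anc T i j"

lemma anc_append: "anc T i j \<Longrightarrow> anc (T @ [x]) i j"
proof (induction rule: anc.induct)
  case (anc_refl j) thus ?case by (rule anc.anc_refl)
next
  case (anc_step j p e i)
  thus ?case by (intro anc.anc_step[of j _ p e]) (auto simp: nth_append)
qed

lemma anc_parent: "anc T i j \<Longrightarrow> occ_parent (T!j) = Some (p,e) \<Longrightarrow> i = j \<or> anc T i p"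
  by (induction rule: anc.induct) auto

lemma anc_root: "anc T i j \<Longrightarrow> occ_parent (T!j) = None \<Longrightarrow> i = j"
  by (induction rule: anc.induct) auto

definition dfs_inv :: "'v tedge set \<Rightarrow> 'v \<Rightarrow> real \<Rightarrow> 'v dfs_state \<Rightarrow> bool" where
  "dfs_inv E s ts S \<longleftrightarrow> base E s ts (d_occ S) (d_sig S) \<and>
     0 < length (d_occ S) \<and> occ_parent (d_occ S ! 0) = None \<and> d_cur S < length (d_occ S) \<and>
     (\<forall>e\<in>d_trav S. sle (d_sig S (dst e)) (tm e)) \<and>
     (\<forall>i<length (d_occ S). anc (d_occ S) i (d_cur S) \<or> closed_occ E (d_sig S) (d_occ S) i)"

lemma dfs_invI:
  assumes "base E s ts (d_occ S) (d_sig S)" "0 < length (d_occ S)" "occ_parent (d_occ S ! 0) = None"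
    "d_cur S < length (d_occ S)" "\<And>e. e\<in>d_trav S \<Longrightarrow> sle (d_sig S (dst e)) (tm e)"
    "\<And>i. i<length (d_occ S) \<Longrightarrow> anc (d_occ S) i (d_cur S) \<or> closed_occ E (d_sig S) (d_occ S) i"
  shows "dfs_inv E s ts S"
  using assms unfolding dfs_inv_def by blast

lemma dfs_invD:
  assumes "dfs_inv E s ts S"
  shows "base E s ts (d_occ S) (d_sig S)" "0 < length (d_occ S)" "occ_parent (d_occ S ! 0) = None"
    "d_cur S < length (d_occ S)" "\<And>e. e\<in>d_trav S \<Longrightarrow> sle (d_sig S (dst e)) (tm e)"
    "\<And>i. i<length (d_occ S) \<Longrightarrow> anc (d_occ S) i (d_cur S) \<or> closed_occ E (d_sig S) (d_occ S) i"
  using assms unfolding dfs_inv_def by blast+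

lemma dfs_inv_init: "dfs_inv E s ts (dfs_init s ts)"
proof (rule dfs_invI)
  show "base E s ts (d_occ (dfs_init s ts)) (d_sig (dfs_init s ts))"
    unfolding base_def dfs_init_def by (simp add: occ_parent_def occ_vertex_def occ_time_def sle_def)
qed (auto simp: dfs_init_def occ_parent_def intro: anc_refl)

lemma dfs_avail_empty_closed:
  assumes "dfs_avail E S = {}" "\<And>e. e\<in>d_trav S \<Longrightarrow> sle (d_sig S (dst e)) (tm e)"
  shows "closed_occ E (d_sig S) (d_occ S) (d_cur S)"
  unfolding closed_occ_def
proof (intro ballI impI)
  fix e assume "e \<in> E" "src e = occ_vertex (d_occ S ! d_cur S)" "occ_time (d_occ S ! d_cur S) \<le> tm e"
  hence "e \<in> d_trav S" using assms(1) unfolding dfs_avail_def by blast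
  thus "sle (d_sig S (dst e)) (tm e)" using assms(2) by blast
qed

lemma dfs_inv_step:
  assumes st: "dfs_step E S S'" and inv: "dfs_inv E s ts S"
  shows "dfs_inv E s ts S'"
  using st
proof cases
  case (backtrack p e0)
  note I = dfs_invD[OF inv]
  have pl: "p < d_cur S" using base_parentD[OF I(1) I(4) backtrack(3)] by blast
  have cc: "closed_occ E (d_sig S) (d_occ S) (d_cur S)"
    using dfs_avail_empty_closed[OF backtrack(2) I(5)] .
  show ?thesis unfolding backtrack(1)
  proof (rule dfs_invI)
    fix i assume "i < length (d_occ (S\<lparr>d_cur := p\<rparr>))"
    hence "anc (d_occ S) i (d_cur S) \<or> closed_occ E (d_sig S) (d_occ S) i" using I(6) by simp
    thus "anc (d_occ (S\<lparr>d_cur := p\<rparr>)) i (d_cur (S\<lparr>d_cur := p\<rparr>)) \<or>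
          closed_occ E (d_sig (S\<lparr>d_cur := p\<rparr>)) (d_occ (S\<lparr>d_cur := p\<rparr>)) i"
      using cc anc_parent[OF _ backtrack(3)] by auto
  qed (use I pl in auto)
next
  case (advance_new e)
  note I = dfs_invD[OF inv]
  let ?T = "d_occ S" and ?c = "d_cur S" and ?s = "d_sig S"
  have e: "e \<in> E" "src e = occ_vertex (?T!?c)" "occ_time (?T!?c) \<le> tm e"
    using advance_new(2) unfolding dfs_avail_def by auto
  have dc: "dec ?s (?s(dst e := Some (tm e)))" using dec_upd[of ?s "dst e" "tm e", OF advance_new(4)] .
  let ?T' = "?T @ [(dst e, tm e, Some (?c, e))]"
  have b': "base E s ts ?T' (?s(dst e := Some (tm e)))"
    using base_append[OF I(1) I(4) e advance_new(4)] .
  have tr: "\<And>e'. e'\<in>insert e (d_trav S) \<Longrightarrow> sle ((?s(dst e := Some (tm e))) (dst e')) (tm e')"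
  proof -
    fix e' assume "e' \<in> insert e (d_trav S)"
    thus "sle ((?s(dst e := Some (tm e))) (dst e')) (tm e')"
    proof
      assume "e' = e" thus ?thesis by (simp add: sle_def)
    next
      assume "e' \<in> d_trav S" thus ?thesis using sle_dec[OF I(5) dc] by blast
    qed
  qed
  have an: "\<And>i. i<length ?T' \<Longrightarrow> anc ?T' i (length ?T) \<or> closed_occ E (?s(dst e := Some (tm e))) ?T' i"
  proof -
    fix i assume i: "i < length ?T'"
    show "anc ?T' i (length ?T) \<or> closed_occ E (?s(dst e := Some (tm e))) ?T' i"
    proof (cases "i < length ?T")
      case True
      hence "anc ?T i ?c \<or> closed_occ E ?s ?T i" using I(6) by blast
      thus ?thesis
      proof
        assume "anc ?T i ?c"
        hence "anc ?T' i ?c" by (rule anc_append)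
        hence "anc ?T' i (length ?T)"
          by (intro anc_step[of "length ?T" _ ?c e]) (auto simp: occ_parent_def)
        thus ?thesis ..
      next
        assume "closed_occ E ?s ?T i"
        hence "closed_occ E (?s(dst e := Some (tm e))) ?T' i"
          by (rule closed_dec[OF _ dc]) (simp add: nth_append True)
        thus ?thesis ..
      qed
    next
      case False
      hence "i = length ?T" using i by simp
      thus ?thesis by (simp add: anc_refl)
    qed
  qed
  show ?thesis unfolding advance_new(1)
  proof (rule dfs_invI)
    show "occ_parent (d_occ (S\<lparr>d_occ := ?T', d_sig := ?s(dst e \<mapsto> tm e), d_trav := insert e (d_trav S),
                 d_cur := length ?T\<rparr>) ! 0) = None"
      using I(2,3) by (simp add: nth_append)
  qed (use b' tr an in auto)
next
  case (advance_old e)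
  note I = dfs_invD[OF inv]
  have "sle (d_sig S (dst e)) (tm e)" using not_above_sle[OF advance_old(4)] .
  thus ?thesis unfolding advance_old(1) by (intro dfs_invI) (use I in auto)
qed

lemma dfs_good:
  assumes "dfs_tree E s ts T" shows "\<exists>\<sigma>. good E s ts T \<sigma>"
proof -
  obtain S where r: "(dfs_step E)\<^sup>*\<^sup>* (dfs_init s ts) S" and f: "dfs_final E S" and T: "T = d_occ S"
    using assms unfolding dfs_tree_def by blast
  have inv: "dfs_inv E s ts S" using r
    by (induction rule: rtranclp_induct) (auto intro: dfs_inv_init dfs_inv_step)
  note I = dfs_invD[OF inv]
  have c0: "d_cur S = 0" and av: "dfs_avail E S = {}" using f by (auto simp: dfs_final_def)
  have cc: "closed_occ E (d_sig S) (d_occ S) 0"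
    using dfs_avail_empty_closed[OF av I(5)] c0 by simp
  have "\<forall>i<length (d_occ S). closed_occ E (d_sig S) (d_occ S) i"
  proof (intro allI impI)
    fix i assume "i < length (d_occ S)"
    hence "anc (d_occ S) i 0 \<or> closed_occ E (d_sig S) (d_occ S) i" using I(6) c0 by metis
    moreover have "anc (d_occ S) i 0 \<Longrightarrow> i = 0" using anc_root I(3) by metis
    ultimately show "closed_occ E (d_sig S) (d_occ S) i" using cc by auto
  qed
  thus ?thesis using I(1) T unfolding good_def by blast
qed



definition bT :: "'v bfs_state \<Rightarrow> 'v occ list" where
  "bT S = map brec_to_occ (b_recs S)"

lemma brec_simps[simp]:
  "occ_vertex (brec_to_occ x) = r_vertex x"
  "occ_time (brec_to_occ x) = r_time x"
  "occ_parent (brec_to_occ x) = snd (snd (snd x))"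
  by (simp_all add: brec_to_occ_def occ_vertex_def occ_time_def occ_parent_def r_vertex_def r_time_def)

definition proc_some :: "'v tedge set \<Rightarrow> 'v occ list \<Rightarrow> ('v \<Rightarrow> real option) \<Rightarrow> nat \<Rightarrow> nat \<Rightarrow> 'v tedge set \<Rightarrow> 'v set \<Rightarrow> bool" where
  "proc_some E T \<sigma> m r B W \<longleftrightarrow> r < m \<and> B \<subseteq> E \<and>
     (\<forall>e\<in>B. src e = occ_vertex (T!r) \<and> occ_time (T!r) \<le> tm e) \<and>
     (\<forall>k<m. k \<noteq> r \<longrightarrow> closed_occ E \<sigma> T k) \<and>
     (\<forall>e\<in>E. src e = occ_vertex (T!r) \<longrightarrow> occ_time (T!r) \<le> tm e \<longrightarrow> (e \<in> B \<and> dst e \<in> W) \<or> sle (\<sigma> (dst e)) (tm e))"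

definition bfs_inv_m :: "'v tedge set \<Rightarrow> 'v \<Rightarrow> real \<Rightarrow> 'v bfs_state \<Rightarrow> nat \<Rightarrow> bool" where
  "bfs_inv_m E s ts S m \<longleftrightarrow> base E s ts (bT S) (b_sig S) \<and>
     (\<forall>e\<in>b_trav S. sle (b_sig S (dst e)) (tm e)) \<and>
     m \<le> length (b_recs S) \<and> b_queue S = [m..<length (b_recs S)] \<and>
     (\<forall>k<length (b_recs S). \<forall>p e. occ_parent (bT S!k) = Some (p,e) \<longrightarrow> p < m) \<and>
     (case b_proc S of None \<Rightarrow> (\<forall>k<m. closed_occ E (b_sig S) (bT S) k)
        | Some (r,B,W) \<Rightarrow> proc_some E (bT S) (b_sig S) m r B W)"

lemma proc_step:
  assumes p: "proc_some E T \<sigma> m r B W" and e: "e \<in> B" and mn: "\<forall>e'\<in>B. dst e' = dst e \<longrightarrow> tm e \<le> tm e'"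
    and d: "dec \<sigma> \<sigma>'" and sl: "sle (\<sigma>' (dst e)) (tm e)" and same: "\<forall>k<m. T'!k = T!k"
  shows "proc_some E T' \<sigma>' m r B (W - {dst e})"
proof -
  have rm: "r < m" using p by (simp add: proc_some_def)
  have Tr: "T'!r = T!r" using same rm by simp
  have c1: "\<forall>k<m. k \<noteq> r \<longrightarrow> closed_occ E \<sigma>' T' k"
  proof (intro allI impI)
    fix k assume k: "k < m" "k \<noteq> r"
    hence "closed_occ E \<sigma> T k" using p by (simp add: proc_some_def)
    thus "closed_occ E \<sigma>' T' k" using closed_dec[OF _ d] same k by blast
  qed
  have c2: "\<forall>e'\<in>E. src e' = occ_vertex (T'!r) \<longrightarrow> occ_time (T'!r) \<le> tm e' \<longrightarrow>
             (e' \<in> B \<and> dst e' \<in> W - {dst e}) \<or> sle (\<sigma>' (dst e')) (tm e')"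
  proof (intro ballI impI)
    fix e' assume a: "e' \<in> E" "src e' = occ_vertex (T'!r)" "occ_time (T'!r) \<le> tm e'"
    hence "(e' \<in> B \<and> dst e' \<in> W) \<or> sle (\<sigma> (dst e')) (tm e')" using p Tr by (simp add: proc_some_def)
    thus "(e' \<in> B \<and> dst e' \<in> W - {dst e}) \<or> sle (\<sigma>' (dst e')) (tm e')"
    proof
      assume b: "e' \<in> B \<and> dst e' \<in> W"
      show ?thesis
      proof (cases "dst e' = dst e")
        case True
        hence "tm e \<le> tm e'" using mn b by blast
        thus ?thesis using sl True sle_mono by metis
      next
        case False thus ?thesis using b by blast
      qed
    next
      assume "sle (\<sigma> (dst e')) (tm e')" thus ?thesis using sle_dec[OF _ d] by blast
    qed
  qed
  show ?thesis using p c1 c2 Tr unfolding proc_some_def by simp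
qed

lemma bfs_inv_init: "bfs_inv_m E s ts (bfs_init s ts) 0"
  unfolding bfs_inv_m_def bfs_init_def bT_def base_def
  by (simp add: brec_to_occ_def occ_parent_def occ_vertex_def occ_time_def sle_def)

lemma bfs_inv_mI:
  assumes "base E s ts (bT S) (b_sig S)" "\<forall>e\<in>b_trav S. sle (b_sig S (dst e)) (tm e)"
     "m \<le> length (b_recs S)" "b_queue S = [m..<length (b_recs S)]"
     "\<forall>k<length (b_recs S). \<forall>p e. occ_parent (bT S!k) = Some (p,e) \<longrightarrow> p < m"
     "case b_proc S of None \<Rightarrow> (\<forall>k<m. closed_occ E (b_sig S) (bT S) k)
        | Some (r,B,W) \<Rightarrow> proc_some E (bT S) (b_sig S) m r B W"
  shows "bfs_inv_m E s ts S m"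
  using assms unfolding bfs_inv_m_def by blast

lemma bfs_inv_mD:
  assumes "bfs_inv_m E s ts S m"
  shows "base E s ts (bT S) (b_sig S)" "\<forall>e\<in>b_trav S. sle (b_sig S (dst e)) (tm e)"
     "m \<le> length (b_recs S)" "b_queue S = [m..<length (b_recs S)]"
     "\<forall>k<length (b_recs S). \<forall>p e. occ_parent (bT S!k) = Some (p,e) \<longrightarrow> p < m"
     "case b_proc S of None \<Rightarrow> (\<forall>k<m. closed_occ E (b_sig S) (bT S) k)
        | Some (r,B,W) \<Rightarrow> proc_some E (bT S) (b_sig S) m r B W"
  using assms unfolding bfs_inv_m_def by blast+

lemma bfs_create:
  assumes inv: "bfs_inv_m E s ts S m" and pr: "b_proc S = Some (r,B,W)" and e: "e \<in> B"
    and mn: "\<forall>e'\<in>B. dst e' = dst e \<longrightarrow> tm e \<le> tm e'" and ab: "above (b_sig S (dst e)) (tm e)"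
  shows "bfs_inv_m E s ts (S\<lparr>b_recs := b_recs S @ [(dst e, lvl, tm e, Some (r, e))],
                    b_queue := b_queue S @ [length (b_recs S)],
                    b_sig := (b_sig S)(dst e := Some (tm e)),
                    b_trav := insert e (b_trav S),
                    b_proc := Some (r, B, W - {dst e})\<rparr>) m"
proof -
  let ?T = "bT S" and ?s = "b_sig S" and ?n = "length (b_recs S)"
  have b: "base E s ts ?T ?s" and tr: "\<forall>e\<in>b_trav S. sle (?s (dst e)) (tm e)"
    and mle: "m \<le> ?n" and q: "b_queue S = [m..<?n]"
    and par: "\<forall>k<?n. \<forall>p e. occ_parent (?T!k) = Some (p,e) \<longrightarrow> p < m"
    and ps: "proc_some E ?T ?s m r B W"
    using bfs_inv_mD[OF inv] pr by simp_all
  have rm: "r < m" and eE: "e \<in> E" and es: "src e = occ_vertex (?T!r)" "occ_time (?T!r) \<le> tm e"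
    using ps e unfolding proc_some_def by auto
  have rl: "r < length ?T" using rm mle by (simp add: bT_def)
  have dc: "dec ?s (?s(dst e := Some (tm e)))" using dec_upd[of ?s "dst e" "tm e", OF ab] .
  have T': "bT (S\<lparr>b_recs := b_recs S @ [(dst e, lvl, tm e, Some (r, e))]\<rparr>) = ?T @ [(dst e, tm e, Some (r,e))]"
    by (simp add: bT_def brec_to_occ_def)
  have b': "base E s ts (?T @ [(dst e, tm e, Some (r,e))]) (?s(dst e := Some (tm e)))"
    using base_append[OF b rl eE es ab] .
  have tr': "\<forall>e'\<in>insert e (b_trav S). sle ((?s(dst e := Some (tm e))) (dst e')) (tm e')"
    using tr sle_dec[OF _ dc] by (auto simp: sle_def)
  have par': "\<forall>k<Suc ?n. \<forall>p e'. occ_parent ((?T @ [(dst e, tm e, Some (r,e))])!k) = Some (p,e') \<longrightarrow> p < m"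
  proof (intro allI impI)
    fix k p e' assume k: "k < Suc ?n" and pe: "occ_parent ((?T @ [(dst e, tm e, Some (r,e))])!k) = Some (p,e')"
    show "p < m"
    proof (cases "k < ?n")
      case True
      hence "occ_parent (?T!k) = Some (p,e')" using pe by (simp add: nth_append bT_def)
      thus ?thesis using par True by blast
    next
      case False hence "k = ?n" using k by simp
      thus ?thesis using pe rm by (simp add: nth_append bT_def occ_parent_def)
    qed
  qed
  have ps': "proc_some E (?T @ [(dst e, tm e, Some (r,e))]) (?s(dst e := Some (tm e))) m r B (W - {dst e})"
    using proc_step[OF ps e mn dc] mle by (auto simp: sle_def nth_append bT_def)
  show ?thesis unfolding bfs_inv_m_def using b' tr' par' ps' mle q T'
    by (simp add: bT_def)
qed


lemma bfs_inv_step: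
  assumes st: "bfs_step E S S'" and inv: "bfs_inv_m E s ts S m"
  shows "\<exists>m'. bfs_inv_m E s ts S' m'"
  using st
proof cases
  case (pop r rest B)
  let ?T = "bT S" and ?s = "b_sig S" and ?n = "length (b_recs S)"
  have b: "base E s ts ?T ?s" and tr: "\<forall>e\<in>b_trav S. sle (?s (dst e)) (tm e)"
    and mle: "m \<le> ?n" and q: "b_queue S = [m..<?n]"
    and par: "\<forall>k<?n. \<forall>p e. occ_parent (?T!k) = Some (p,e) \<longrightarrow> p < m"
    and cl: "\<forall>k<m. closed_occ E ?s ?T k"
    using bfs_inv_mD[OF inv] pop(2) by simp_all
  have qq: "[m..<?n] = r # rest" using q pop by simp
  hence "m < ?n \<and> m = r \<and> [Suc m..<?n] = rest" using upt_eq_Cons_conv[of m ?n r rest] unfolding Suc_eq_plus1 by blast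
  hence rm: "r = m" and mn: "m < ?n" and rest: "rest = [Suc m..<?n]" by auto
  have Tr: "occ_vertex (?T!r) = r_vertex (b_recs S ! r)" "occ_time (?T!r) = r_time (b_recs S ! r)"
    using rm mn by (simp_all add: bT_def)
  have ps: "proc_some E ?T ?s (Suc m) r B (dst ` B)"
    unfolding proc_some_def
  proof (intro conjI allI impI ballI)
    show "r < Suc m" using rm by simp
    show "B \<subseteq> E" unfolding pop(4) by blast
    fix e assume "e \<in> B"
    thus "src e = occ_vertex (?T!r)" "occ_time (?T!r) \<le> tm e" using Tr unfolding pop(4) by auto
  next
    fix k assume "k < Suc m" "k \<noteq> r"
    thus "closed_occ E ?s ?T k" using cl rm by simp
  next
    fix e assume a: "e \<in> E" "src e = occ_vertex (?T!r)" "occ_time (?T!r) \<le> tm e"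
    show "(e \<in> B \<and> dst e \<in> dst ` B) \<or> sle (?s (dst e)) (tm e)"
    proof (cases "e \<in> b_trav S")
      case True thus ?thesis using tr by blast
    next
      case False
      hence "e \<in> B" using a Tr unfolding pop(4) by simp
      thus ?thesis by blast
    qed
  qed
  have "bfs_inv_m E s ts S' (Suc m)"
    unfolding pop(1)
  proof (rule bfs_inv_mI)
    have "\<forall>k<?n. \<forall>p e. occ_parent (?T!k) = Some (p,e) \<longrightarrow> p < Suc m" using par less_SucI by blast
    thus "\<forall>k<length (b_recs (S\<lparr>b_queue := rest, b_proc := Some (r, B, dst ` B)\<rparr>)).
       \<forall>p e. occ_parent (bT (S\<lparr>b_queue := rest, b_proc := Some (r, B, dst ` B)\<rparr>) ! k) = Some (p, e) \<longrightarrow> p < Suc m"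
      by (simp add: bT_def)
  qed (use b tr mn rest ps in \<open>simp_all add: bT_def\<close>)
  thus ?thesis ..
next
  case (finish r B)
  let ?T = "bT S" and ?s = "b_sig S"
  have ps: "proc_some E ?T ?s m r B {}" using bfs_inv_mD(6)[OF inv] finish(2) by simp
  have "\<forall>k<m. closed_occ E ?s ?T k"
  proof (intro allI impI)
    fix k assume k: "k < m"
    show "closed_occ E ?s ?T k"
    proof (cases "k = r")
      case False thus ?thesis using ps k by (simp add: proc_some_def)
    next
      case True thus ?thesis using ps unfolding proc_some_def closed_occ_def by blast
    qed
  qed
  hence "bfs_inv_m E s ts S' m" unfolding finish(1) using bfs_inv_mD[OF inv]
    by (intro bfs_inv_mI) (simp_all add: bT_def)
  thus ?thesis ..
next
  case (create_i r B W e)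
  thus ?thesis using bfs_create[OF inv] by blast
next
  case (create_iii r B W e)
  thus ?thesis using bfs_create[OF inv] by blast
next
  case (skip r B W e)
  let ?T = "bT S" and ?s = "b_sig S"
  have ps: "proc_some E ?T ?s m r B W" using bfs_inv_mD(6)[OF inv] skip(2) by simp
  have sl: "sle (?s (dst e)) (tm e)" using not_above_sle skip by blast
  have ps': "proc_some E ?T ?s m r B (W - {dst e})"
    using proc_step[OF ps _ _ dec_refl sl] skip by blast
  have "bfs_inv_m E s ts S' m" unfolding skip(1) using bfs_inv_mD[OF inv] ps' sl
    by (intro bfs_inv_mI) (simp_all add: bT_def)
  thus ?thesis ..
next
  case (update_ii r B W e i)
  let ?T = "bT S" and ?s = "b_sig S" and ?n = "length (b_recs S)"
  let ?x = "(dst e, Suc (r_level (b_recs S ! r)), tm e, Some (r, e))"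
  have b: "base E s ts ?T ?s" and tr: "\<forall>e\<in>b_trav S. sle (?s (dst e)) (tm e)"
    and mle: "m \<le> ?n" and q: "b_queue S = [m..<?n]"
    and par: "\<forall>k<?n. \<forall>p e. occ_parent (?T!k) = Some (p,e) \<longrightarrow> p < m"
    and ps: "proc_some E ?T ?s m r B W"
    using bfs_inv_mD[OF inv] update_ii(2) by simp_all
  have im: "m \<le> i" "i < ?n" using update_ii q by auto
  have rm: "r < m" and eE: "e \<in> E" and es: "src e = occ_vertex (?T!r)" "occ_time (?T!r) \<le> tm e"
    using ps update_ii unfolding proc_some_def by auto
  have ab: "above (?s (dst e)) (tm e)" using update_ii by blast
  have dc: "dec ?s (?s(dst e := Some (tm e)))" using dec_upd[of ?s "dst e" "tm e", OF ab] .
  have T': "bT (S\<lparr>b_recs := (b_recs S)[i := ?x]\<rparr>) = ?T[i := (dst e, tm e, Some (r,e))]"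
    by (simp add: bT_def brec_to_occ_def map_update)
  have dj: "dst e = occ_vertex (?T!i)" using update_ii im by (simp add: bT_def)
  have np: "\<forall>k<length ?T. \<forall>p e'. occ_parent (?T!k) = Some (p,e') \<longrightarrow> p \<noteq> i"
    using par im by (fastforce simp: bT_def)
  have b': "base E s ts (?T[i := (dst e, tm e, Some (r,e))]) (?s(dst e := Some (tm e)))"
    using base_update[OF b _ _ eE es dj ab np] im rm by (simp add: bT_def)
  have tr': "\<forall>e'\<in>insert e (b_trav S). sle ((?s(dst e := Some (tm e))) (dst e')) (tm e')"
    using tr sle_dec[OF _ dc] by (auto simp: sle_def)
  have par': "\<forall>k<?n. \<forall>p e'. occ_parent ((?T[i := (dst e, tm e, Some (r,e))])!k) = Some (p,e') \<longrightarrow> p < m"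
  proof (intro allI impI)
    fix k p e' assume k: "k < ?n" and pe: "occ_parent ((?T[i := (dst e, tm e, Some (r,e))])!k) = Some (p,e')"
    show "p < m"
    proof (cases "k = i")
      case False
      hence "occ_parent (?T!k) = Some (p,e')" using pe by simp
      thus ?thesis using par k by blast
    next
      case True thus ?thesis using pe rm im by (simp add: bT_def occ_parent_def)
    qed
  qed
  have ps': "proc_some E (?T[i := (dst e, tm e, Some (r,e))]) (?s(dst e := Some (tm e))) m r B (W - {dst e})"
    using proc_step[OF ps _ _ dc] update_ii im by (auto simp: sle_def)
  have "bfs_inv_m E s ts S' m" unfolding update_ii(1) 
    by (rule bfs_inv_mI) (use b' tr' par' ps' mle q T' in \<open>simp_all add: bT_def\<close>)
  thus ?thesis ..

qed

lemma bfs_good: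
  assumes "bfs_tree E s ts T" shows "\<exists>\<sigma>. good E s ts T \<sigma>"
proof -
  obtain S where r: "(bfs_step E)\<^sup>*\<^sup>* (bfs_init s ts) S" and f: "bfs_final S" and T: "T = bT S"
    using assms unfolding bfs_tree_def bT_def by blast
  have "\<exists>m. bfs_inv_m E s ts S m" using r
  proof (induction rule: rtranclp_induct)
    case base show ?case by (rule exI, rule bfs_inv_init)
  next
    case (step y z)
    then obtain m where "bfs_inv_m E s ts y m" by blast
    thus ?case using bfs_inv_step[OF step(2)] by blast
  qed
  then obtain m where inv: "bfs_inv_m E s ts S m" by blast
  have q: "[m..<length (b_recs S)] = []" and pn: "b_proc S = None"
    using f bfs_inv_mD(4)[OF inv] unfolding bfs_final_def by simp_all
  have "\<forall>k<length T. closed_occ E (b_sig S) T k"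
    using bfs_inv_mD(3,6)[OF inv] pn q T by (auto simp: bT_def)
  moreover have "base E s ts T (b_sig S)" using bfs_inv_mD(1)[OF inv] T by simp
  ultimately show ?thesis unfolding good_def by blast
qed


theorem mainTheorem8:
  fixes V :: "'v set" and E :: "'v tedge set" and s v :: 'v and ts :: real
    and T :: "'v occ list"
  assumes "temporal_graph V E" and "s \<in> V"
    and "dfs_tree E s ts T \<or> bfs_tree E s ts T"
    and "v \<in> V" and "v \<noteq> s"
  shows "(occs_of T v \<noteq> {} \<longrightarrow>
            (\<forall>i\<in>occs_of T v. (\<forall>j\<in>occs_of T v. occ_time (T ! i) \<le> occ_time (T ! j)) \<longrightarrow>
               (\<exists>P. tree_path T i P) \<and> (\<forall>P. tree_path T i P \<longrightarrow> foremost_path E s v ts P)))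
       \<and> (occs_of T v = {} \<longrightarrow> \<not> (\<exists>P. temporal_path E s v ts P))"
proof -
  have "\<exists>\<sigma>. good E s ts T \<sigma>"
  proof (rule disjE[OF assms(3)])
    assume "dfs_tree E s ts T" thus ?thesis by (rule dfs_good)
  next
    assume "bfs_tree E s ts T" thus ?thesis by (rule bfs_good)
  qed
  then obtain \<sigma> where "good E s ts T \<sigma>" by blast
  thus ?thesis by (rule good_main[OF _ assms(5)])
qed

end
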